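(* Consider the two-signal setting in the context. Assume $f=f_xf_y$ with $f_x,f_y$ symmetric about $0$ (cdfs $F_x,F_y$), and let $\delta,\gamma,\xi>0$ satisfy $1-\delta\ge\gamma$, $1>3\delta+2\gamma$, $$\frac{F_x(\xi)}{1-F_x(\xi)}\cdot\frac{\sup_{a\in[0,\delta]}f_y(\eta-a)}{\inf_{a\in[1-\delta,1]}f_y(\eta-a)}\le\frac{1-c}{c}\ \text{ for all }\eta\ge1-\delta-\gamma,\qquad F_x(\xi)F_y(\gamma)\ge1-\delta.$$ Let $t\in\mathbb{R}$ and let $A:\mathbb{R}\to[0,1]$ be measurable with $A(\theta)\in[1-\delta,1]$ for $\theta<t$ and $A(\theta)\in[0,\delta]$ for $\theta\ge t$. Then: (1) if $y_i\ge1-\delta-\gamma$ and $x_i\le t+\xi$, then $P[\theta<t\mid A(\cdot),(x_i,y_i)]\ge c$; (2) if $y_i\le\delta+\gamma$ and $x_i\ge t-\xi$, then $P[\theta\ge t\mid A(\cdot),(x_i,y_i)]\ge c$; (3) for every $\theta<t$, $P[y_i\ge1-\delta-\gamma\text{ and }x_i\le t+\xi\mid A(\cdot),\theta]\ge1-\delta$; (4) for every $\theta\ge t$, $P[y_i\le\delta+\gamma\text{ and }x_i>t-\xi\mid A(\cdot),\theta]\ge1-\delta$.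
   Context: Agent $i$ observes $x_i=\theta+\epsilon^x_i$ and $y_i=A(\theta)+\epsilon^y_i$, where $\epsilon^x_i,\epsilon^y_i$ are independent with densities $f_x,f_y$; $c\in(0,1)$. Agents have an (improper) uniform prior on $\theta\in\mathbb{R}$, so the posterior given $(x,y)$ and the conjectured function $A(\cdot)$ is $P[\theta\in S\mid A(\cdot),(x,y)]=\int_S f_x(x-\theta)f_y(y-A(\theta))\,d\theta\big/\int_{\mathbb{R}} f_x(x-\theta)f_y(y-A(\theta))\,d\theta$ (the limit of posteriors under uniform priors on $[t-N,t+N]$). In (3) and (4), the probability is over the errors $(\epsilon^x_i,\epsilon^y_i)$ for the given fundamental $\theta$. *)

theory Defs
  imports "HOL-Probability.Probability"
begin

definition is_density :: "(real \<Rightarrow> real) \<Rightarrow> bool" where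
  "is_density f \<longleftrightarrow> f \<in> borel_measurable lborel \<and> (\<forall>u. 0 \<le> f u)
     \<and> (\<integral>\<^sup>+ u. ennreal (f u) \<partial>lborel) = 1"

text \<open>Unnormalised posterior mass of the set S under the improper uniform prior,
  given the conjectured function A and the signals (x,y).\<close>
definition post_mass ::
  "(real \<Rightarrow> real) \<Rightarrow> (real \<Rightarrow> real) \<Rightarrow> (real \<Rightarrow> real) \<Rightarrow> real \<Rightarrow> real \<Rightarrow> real set \<Rightarrow> ennreal" where
  "post_mass fx fy A x y S =
     (\<integral>\<^sup>+ \<theta>. ennreal (fx (x - \<theta>) * fy (y - A \<theta>)) * indicator S \<theta> \<partial>lborel)"

definition posterior ::
  "(real \<Rightarrow> real) \<Rightarrow> (real \<Rightarrow> real) \<Rightarrow> (real \<Rightarrow> real) \<Rightarrow> real \<Rightarrow> real \<Rightarrow> real set \<Rightarrow> ennreal" where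
  "posterior fx fy A x y S = post_mass fx fy A x y S / post_mass fx fy A x y UNIV"

definition err_law :: "(real \<Rightarrow> real) \<Rightarrow> (real \<Rightarrow> real) \<Rightarrow> (real \<times> real) measure" where
  "err_law fx fy = density lborel fx \<Otimes>\<^sub>M density lborel fy"

end

theory Submission
  imports Defs
begin

lemma dens_prob: assumes "is_density f" shows "prob_space (density lborel f)"
proof (rule prob_spaceI)
  have m: "f \<in> borel_measurable lborel" using assms unfolding is_density_def by auto
  show "emeasure (density lborel f) (space (density lborel f)) = 1"
    using assms m by (simp add: emeasure_density is_density_def)
qed

lemma dens_emeasure: assumes "is_density f" "S \<in> sets borel"
  shows "emeasure (density lborel f) S = (\<integral>\<^sup>+ u. ennreal (f u) * indicator S u \<partial>lborel)"
  using assms by (simp add: emeasure_density is_density_def)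

lemma dens_shift: assumes "is_density f" "S \<in> sets borel"
  shows "(\<integral>\<^sup>+ \<theta>. ennreal (f (x - \<theta>)) * indicator S (x - \<theta>) \<partial>lborel) = emeasure (density lborel f) S"
proof -
  have m: "f \<in> borel_measurable borel" using assms unfolding is_density_def by auto
  have mm: "(\<lambda>u::real. ennreal (f u) * indicator S u) \<in> borel_measurable borel"
    using m assms(2) by (intro borel_measurable_times_ennreal borel_measurable_indicator measurable_compose[OF _ measurable_ennreal]) auto
  have "emeasure (density lborel f) S = (\<integral>\<^sup>+ u. ennreal (f u) * indicator S u \<partial>lborel)"
    using dens_emeasure assms by blast
  also have "\<dots> = ennreal \<bar>-1\<bar> * (\<integral>\<^sup>+ \<theta>. ennreal (f (x + -1 * \<theta>)) * indicator S (x + -1 * \<theta>) \<partial>lborel)"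
    by (rule nn_integral_real_affine[OF mm]) simp
  finally show ?thesis by simp
qed

lemma dens_refl: assumes "is_density f" "S \<in> sets borel" "\<And>u. f (-u) = f u"
  shows "emeasure (density lborel f) (uminus -` S) = emeasure (density lborel f) S"
proof -
  have m: "f \<in> borel_measurable borel" using assms unfolding is_density_def by auto
  have mm: "(\<lambda>u::real. ennreal (f u) * indicator S u) \<in> borel_measurable borel"
    using m assms(2) by (intro borel_measurable_times_ennreal borel_measurable_indicator measurable_compose[OF _ measurable_ennreal]) auto
  have S': "uminus -` S \<in> sets borel"
    using measurable_sets[OF borel_measurable_uminus[OF measurable_ident_sets[OF refl]] assms(2)] by simp
  have "emeasure (density lborel f) S = (\<integral>\<^sup>+ u. ennreal (f u) * indicator S u \<partial>lborel)"
    using dens_emeasure assms by blast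
  also have "\<dots> = ennreal \<bar>-1\<bar> * (\<integral>\<^sup>+ \<theta>. ennreal (f (0 + -1 * \<theta>)) * indicator S (0 + -1 * \<theta>) \<partial>lborel)"
    by (rule nn_integral_real_affine[OF mm]) simp
  also have "\<dots> = (\<integral>\<^sup>+ u. ennreal (f u) * indicator (uminus -` S) u \<partial>lborel)"
    using assms(3) by (simp add: indicator_def)
  also have "\<dots> = emeasure (density lborel f) (uminus -` S)"
    using dens_emeasure[OF assms(1) S'] by simp
  finally show ?thesis by simp
qed

lemma dens_single: assumes "is_density f" shows "emeasure (density lborel f) {a} = 0"
proof -
  have m: "f \<in> borel_measurable lborel" using assms unfolding is_density_def by auto
  have m': "(\<lambda>x. ennreal (f x)) \<in> borel_measurable lborel" using m by measurable
  have "AE x in lborel. x \<in> {a} \<longrightarrow> ennreal (f x) = 0"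
    using AE_lborel_singleton[of a] by (rule eventually_mono) simp
  hence "{a} \<in> null_sets (density lborel f)"
    by (subst null_sets_density_iff[OF m']) simp
  thus ?thesis by (rule null_setsD1)
qed

lemma ratio_extract:
  fixes h :: "real \<Rightarrow> real" and F c \<delta> :: real
  assumes F: "0 < F" "F \<le> 1" and c: "0 < c" "c < 1" and d: "0 < \<delta>" "\<delta> \<le> 1"
    and hpos: "\<And>a. 0 \<le> h a"
    and r: "ereal F / ereal (1 - F) * ((SUP a\<in>{0..\<delta>}. ereal (h a)) / (INF a\<in>{1-\<delta>..1}. ereal (h a))) \<le> ereal ((1-c)/c)"
  shows "\<exists>B I. 0 \<le> B \<and> 0 \<le> I \<and> (\<forall>a\<in>{0..\<delta>}. h a \<le> B) \<and> (\<forall>b\<in>{1-\<delta>..1}. I \<le> h b)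
     \<and> c * F * B \<le> (1-c) * (1-F) * I"
proof -
  define Se where "Se = (SUP a\<in>{0..\<delta>}. ereal (h a))"
  define Ie where "Ie = (INF a\<in>{1-\<delta>..1}. ereal (h a))"
  have r': "ereal F / ereal (1 - F) * (Se / Ie) \<le> ereal ((1-c)/c)" using r Se_def Ie_def by simp
  have Se_ge: "\<forall>a\<in>{0..\<delta>}. ereal (h a) \<le> Se" unfolding Se_def by (auto intro: SUP_upper)
  have "(0::real) \<in> {0..\<delta>}" using d by simp
  hence "ereal (h 0) \<le> Se" using Se_ge by blast
  hence Se0: "0 \<le> Se" using hpos[of 0] by (meson ereal_less_eq(5) order_trans)
  have Ie_le: "\<forall>b\<in>{1-\<delta>..1}. Ie \<le> ereal (h b)" unfolding Ie_def by (auto intro: INF_lower)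
  have Ie0: "0 \<le> Ie" unfolding Ie_def using hpos by (auto intro: INF_greatest)
  have "(1::real) \<in> {1-\<delta>..1}" using d by simp
  hence "Ie \<le> ereal (h 1)" using Ie_le by blast
  then obtain I0 where I0: "Ie = ereal I0" using Ie0 by (cases Ie) auto
  have I00: "0 \<le> I0" using I0 Ie0 by simp
  show ?thesis
  proof (cases "Se = 0")
    case True
    have h0: "\<forall>a\<in>{0..\<delta>}. h a \<le> 0"
    proof
      fix a assume "a \<in> {0..\<delta>}"
      hence "ereal (h a) \<le> 0" using Se_ge True by simp
      thus "h a \<le> 0" by simp
    qed
    show ?thesis
      by (rule exI[of _ 0], rule exI[of _ 0]) (simp add: h0 hpos)
  next
    case False
    hence Sp: "0 < Se" using Se0 by simp
    have X: "0 < ereal F / ereal (1 - F)"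
    proof (cases "F = 1")
      case True then show ?thesis by (simp add: divide_ereal_def)
    next
      case False then show ?thesis using F by (simp add: divide_ereal_def)
    qed
    have Ip: "0 < I0"
    proof (rule ccontr)
      assume "\<not> 0 < I0"
      hence "I0 = 0" using I00 by simp
      hence "Se / Ie = \<infinity>" using Sp I0 by (cases Se) (auto simp: divide_ereal_def)
      hence eq: "ereal F / ereal (1 - F) * (Se / Ie) = \<infinity>" using X by (cases "ereal F / ereal (1 - F)") auto
      show False using r' unfolding eq by simp
    qed
    have Y: "0 < Se / Ie" using Sp I0 Ip by (cases Se) (auto simp: divide_ereal_def)
    have F1: "F < 1"
    proof (rule ccontr)
      assume "\<not> F < 1"
      hence "F = 1" using F by simp
      hence "ereal F / ereal (1 - F) = \<infinity>" by (simp add: divide_ereal_def)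
      hence eq: "ereal F / ereal (1 - F) * (Se / Ie) = \<infinity>" using Y by (cases "Se / Ie") auto
      show False using r' unfolding eq by simp
    qed
    have "Se \<noteq> \<infinity>"
    proof
      assume "Se = \<infinity>"
      hence "Se / Ie = \<infinity>" using I0 Ip by (simp add: divide_ereal_def)
      hence eq: "ereal F / ereal (1 - F) * (Se / Ie) = \<infinity>" using X by (cases "ereal F / ereal (1 - F)") auto
      show False using r' unfolding eq by simp
    qed
    then obtain s where s: "Se = ereal s" using Se0 by (cases Se) auto
    have "ereal (F / (1 - F) * (s / I0)) \<le> ereal ((1-c)/c)"
      using r' s I0 Ip F1 by (simp add: divide_ereal_def divide_inverse)
    hence ineq: "F / (1 - F) * (s / I0) \<le> (1-c)/c" by simp
    have "c * F * s \<le> (1-c) * (1-F) * I0"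
    proof -
      have pos: "0 < c * (1 - F) * I0" using c F1 Ip by simp
      have "c * F * s = (F / (1 - F) * (s / I0)) * (c * (1 - F) * I0)" using F1 Ip c by (simp add: field_simps)
      also have "\<dots> \<le> (1-c)/c * (c * (1 - F) * I0)" using ineq pos by (intro mult_right_mono) auto
      also have "\<dots> = (1-c) * (1-F) * I0" using c by (simp add: field_simps)
      finally show ?thesis .
    qed
    moreover have "0 \<le> s" using Se0 s by simp
    ultimately show ?thesis using Se_ge Ie_le s I0 I00 by (intro exI[of _ s] exI[of _ I0]) auto
  qed
qed


lemma dens_facts:
  assumes d: "is_density f" and sym: "\<And>u. f (-u) = f u"
  shows "emeasure (density lborel f) {..a} = ennreal (cdf (density lborel f) a)"
    and "emeasure (density lborel f) {a<..} = ennreal (1 - cdf (density lborel f) a)"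
    and "emeasure (density lborel f) {-a<..} = ennreal (cdf (density lborel f) a)"
    and "emeasure (density lborel f) {-a..} = ennreal (cdf (density lborel f) a)"
    and "emeasure (density lborel f) {..-a} = ennreal (1 - cdf (density lborel f) a)"
    and "0 \<le> cdf (density lborel f) a" "cdf (density lborel f) a \<le> 1"
proof -
  define D where "D = density lborel f"
  interpret P: prob_space D using dens_prob[OF d] D_def by simp
  have sp: "space D = UNIV" unfolding D_def by simp
  have ss: "sets D = sets borel" unfolding D_def by simp
  have e1: "emeasure D {..a} = ennreal (cdf D a)"
    by (simp add: cdf_def P.emeasure_eq_measure)
  have "measure D (space D - {..a}) = 1 - measure D {..a}"
    by (rule P.prob_compl) (simp add: ss)
  moreover have "space D - {..a} = {a<..}" using sp by auto
  ultimately have e2: "emeasure D {a<..} = ennreal (1 - cdf D a)"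
    by (simp add: cdf_def P.emeasure_eq_measure)
  have sg: "emeasure D {a} = 0" using dens_single[OF d] D_def by simp
  have "emeasure D {-a<..} = emeasure D (uminus -` {..<a})"
    by (rule arg_cong[where f="emeasure D"]) auto
  also have "\<dots> = emeasure D {..<a}" unfolding D_def by (rule dens_refl[OF d _ sym]) simp
  also have "\<dots> = emeasure D {..a}"
  proof -
    have "emeasure D {..<a} + emeasure D {a} = emeasure D ({..<a} \<union> {a})"
      by (rule plus_emeasure) (auto simp: ss)
    moreover have "{..<a} \<union> {a} = {..a}" by auto
    ultimately show ?thesis using sg by simp
  qed
  finally have e3: "emeasure D {-a<..} = ennreal (cdf D a)" using e1 by simp
  have "emeasure D {-a..} = emeasure D (uminus -` {..a})"
    by (rule arg_cong[where f="emeasure D"]) auto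
  also have "\<dots> = emeasure D {..a}" unfolding D_def by (rule dens_refl[OF d _ sym]) simp
  finally have e4: "emeasure D {-a..} = ennreal (cdf D a)" using e1 by simp
  have "emeasure D {..-a} = emeasure D (uminus -` {a..})"
    by (rule arg_cong[where f="emeasure D"]) auto
  also have "\<dots> = emeasure D {a..}" unfolding D_def by (rule dens_refl[OF d _ sym]) simp
  also have "\<dots> = emeasure D {a<..}"
  proof -
    have "emeasure D {a<..} + emeasure D {a} = emeasure D ({a<..} \<union> {a})"
      by (rule plus_emeasure) (auto simp: ss)
    moreover have "{a<..} \<union> {a} = {a..}" by auto
    ultimately show ?thesis using sg by simp
  qed
  finally have e5: "emeasure D {..-a} = ennreal (1 - cdf D a)" using e2 by simp
  have "0 \<le> cdf D a" "cdf D a \<le> 1" by (auto simp: cdf_def)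
  with e1 e2 e3 e4 e5 show
       "emeasure (density lborel f) {..a} = ennreal (cdf (density lborel f) a)"
    and "emeasure (density lborel f) {a<..} = ennreal (1 - cdf (density lborel f) a)"
    and "emeasure (density lborel f) {-a<..} = ennreal (cdf (density lborel f) a)"
    and "emeasure (density lborel f) {-a..} = ennreal (cdf (density lborel f) a)"
    and "emeasure (density lborel f) {..-a} = ennreal (1 - cdf (density lborel f) a)"
    and "0 \<le> cdf (density lborel f) a" "cdf (density lborel f) a \<le> 1"
    unfolding D_def by auto
qed

lemma post_generic:
  fixes fx fy A :: "real \<Rightarrow> real" and x y c B I pF qF :: real
  assumes mx: "fx \<in> borel_measurable borel" and my: "fy \<in> borel_measurable borel"
    and mA: "A \<in> borel_measurable borel"
    and px: "\<And>u. 0 \<le> fx u" and py: "\<And>u. 0 \<le> fy u"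
    and P: "P \<in> sets borel" and Q: "\<And>\<theta>. \<theta> \<in> Q \<longleftrightarrow> \<theta> \<notin> P"
    and c: "0 < c" "c < 1" and BI: "0 \<le> B" "0 \<le> I" "0 \<le> pF" "0 \<le> qF"
    and hB: "\<And>\<theta>. \<theta> \<in> P \<Longrightarrow> fy (y - A \<theta>) \<le> B"
    and hI: "\<And>\<theta>. \<theta> \<in> Q \<Longrightarrow> I \<le> fy (y - A \<theta>)"
    and hp: "(\<integral>\<^sup>+\<theta>. ennreal (fx (x - \<theta>)) * indicator P \<theta> \<partial>lborel) \<le> ennreal pF"
    and hq: "ennreal qF \<le> (\<integral>\<^sup>+\<theta>. ennreal (fx (x - \<theta>)) * indicator Q \<theta> \<partial>lborel)"
    and key: "c * pF * B \<le> (1 - c) * qF * I"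
    and tot: "0 < post_mass fx fy A x y UNIV" "post_mass fx fy A x y UNIV < \<infinity>"
  shows "ennreal c \<le> posterior fx fy A x y Q"
proof -
  note [measurable] = mx my mA P
  have Q': "Q = - P" using Q by auto
  have Qm[measurable]: "Q \<in> sets borel" unfolding Q' using P by simp
  define g where "g \<theta> = ennreal (fx (x - \<theta>) * fy (y - A \<theta>))" for \<theta>
  have gm[measurable]: "g \<in> borel_measurable borel" unfolding g_def by measurable
  have fm[measurable]: "(\<lambda>\<theta>. ennreal (fx (x - \<theta>))) \<in> borel_measurable borel" by measurable
  define MP where "MP = (\<integral>\<^sup>+\<theta>. g \<theta> * indicator P \<theta> \<partial>lborel)"
  define MQ where "MQ = (\<integral>\<^sup>+\<theta>. g \<theta> * indicator Q \<theta> \<partial>lborel)"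
  have totq: "post_mass fx fy A x y UNIV = MP + MQ"
  proof -
    have "post_mass fx fy A x y UNIV = (\<integral>\<^sup>+\<theta>. g \<theta> * indicator P \<theta> + g \<theta> * indicator Q \<theta> \<partial>lborel)"
      unfolding post_mass_def g_def using Q by (intro nn_integral_cong) (auto simp: indicator_def)
    also have "\<dots> = MP + MQ" unfolding MP_def MQ_def
      by (rule nn_integral_add) (use gm P Qm in \<open>simp_all add: borel_measurable_times_ennreal borel_measurable_indicator\<close>)
    finally show ?thesis .
  qed
  have pmQ: "post_mass fx fy A x y Q = MQ" unfolding post_mass_def MQ_def g_def by simp
  have pq: "posterior fx fy A x y Q = MQ / (MP + MQ)"
    unfolding posterior_def using totq pmQ by simp
  have MPle: "MP \<le> ennreal B * ennreal pF"
  proof -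
    have "MP \<le> (\<integral>\<^sup>+\<theta>. ennreal B * (ennreal (fx (x - \<theta>)) * indicator P \<theta>) \<partial>lborel)"
      unfolding MP_def g_def
    proof (intro nn_integral_mono)
      fix \<theta>
      show "ennreal (fx (x - \<theta>) * fy (y - A \<theta>)) * indicator P \<theta> \<le> ennreal B * (ennreal (fx (x - \<theta>)) * indicator P \<theta>)"
      proof (cases "\<theta> \<in> P")
        case True
        have "fx (x - \<theta>) * fy (y - A \<theta>) \<le> B * fx (x - \<theta>)"
          using mult_left_mono[OF hB[OF True] px[of "x - \<theta>"]] by (simp add: mult.commute)
        then show ?thesis using True px[of "x - \<theta>"] BI by (simp add: ennreal_mult[symmetric])
      qed simp
    qed
    also have "\<dots> = ennreal B * (\<integral>\<^sup>+\<theta>. ennreal (fx (x - \<theta>)) * indicator P \<theta> \<partial>lborel)"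
      by (rule nn_integral_cmult) measurable
    also have "\<dots> \<le> ennreal B * ennreal pF" using hp by (rule mult_left_mono) simp
    finally show ?thesis .
  qed
  have MQge: "ennreal I * ennreal qF \<le> MQ"
  proof -
    have "ennreal I * ennreal qF \<le> ennreal I * (\<integral>\<^sup>+\<theta>. ennreal (fx (x - \<theta>)) * indicator Q \<theta> \<partial>lborel)"
      using hq by (rule mult_left_mono) simp
    also have "\<dots> = (\<integral>\<^sup>+\<theta>. ennreal I * (ennreal (fx (x - \<theta>)) * indicator Q \<theta>) \<partial>lborel)"
      by (rule nn_integral_cmult[symmetric]) measurable
    also have "\<dots> \<le> MQ"
      unfolding MQ_def g_def
    proof (intro nn_integral_mono)
      fix \<theta>
      show "ennreal I * (ennreal (fx (x - \<theta>)) * indicator Q \<theta>) \<le> ennreal (fx (x - \<theta>) * fy (y - A \<theta>)) * indicator Q \<theta>"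
      proof (cases "\<theta> \<in> Q")
        case True
        have "I * fx (x - \<theta>) \<le> fx (x - \<theta>) * fy (y - A \<theta>)"
          using mult_left_mono[OF hI[OF True] px[of "x - \<theta>"]] by (simp add: mult.commute)
        then have "ennreal (I * fx (x - \<theta>)) \<le> ennreal (fx (x - \<theta>) * fy (y - A \<theta>))"
          by (rule ennreal_leI)
        then show ?thesis using True px[of "x - \<theta>"] BI by (simp add: ennreal_mult[symmetric])
      qed simp
    qed
    finally show ?thesis .
  qed
  have "ennreal c * MP \<le> ennreal c * (ennreal B * ennreal pF)" using MPle by (rule mult_left_mono) simp
  also have "\<dots> = ennreal (c * pF * B)" using c BI by (simp add: ennreal_mult[symmetric] mult_ac)
  also have "\<dots> \<le> ennreal ((1 - c) * qF * I)" using key by (rule ennreal_leI)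
  also have "\<dots> = ennreal (1 - c) * (ennreal I * ennreal qF)" using c BI by (simp add: ennreal_mult[symmetric] mult_ac)
  also have "\<dots> \<le> ennreal (1 - c) * MQ" using MQge by (rule mult_left_mono) simp
  finally have cMP: "ennreal c * MP \<le> ennreal (1 - c) * MQ" .
  have one: "ennreal (1 - c) + ennreal c = 1" using c by (subst ennreal_plus[symmetric]) auto
  have "ennreal c * (MP + MQ) = ennreal c * MP + ennreal c * MQ" by (simp add: distrib_left)
  also have "\<dots> \<le> ennreal (1 - c) * MQ + ennreal c * MQ" using cMP by (rule add_right_mono)
  also have "\<dots> = MQ" using one by (metis distrib_right mult_1)
  finally have cT: "ennreal c * (MP + MQ) \<le> MQ" .
  have T0: "MP + MQ \<noteq> 0" "MP + MQ \<noteq> \<top>" using tot totq by auto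
  have "ennreal c = ennreal c * (MP + MQ) / (MP + MQ)" using T0 by (simp add: ennreal_mult_divide_eq)
  also have "\<dots> \<le> MQ / (MP + MQ)" using cT by (rule divide_right_mono_ennreal)
  finally show ?thesis using pq by simp
qed

theorem lemma2:
  fixes fx fy A :: "real \<Rightarrow> real" and c \<delta> \<gamma> \<xi> t :: real
  assumes c: "0 < c" "c < 1"
    and dens: "is_density fx" "is_density fy"
    and sym: "\<And>u. fx (- u) = fx u" "\<And>u. fy (- u) = fy u"
    and par: "0 < \<delta>" "0 < \<gamma>" "0 < \<xi>" "1 - \<delta> \<ge> \<gamma>" "1 > 3 * \<delta> + 2 * \<gamma>"
    and ratio: "\<And>\<eta>. \<eta> \<ge> 1 - \<delta> - \<gamma> \<Longrightarrow>
       ereal (cdf (density lborel fx) \<xi>) / ereal (1 - cdf (density lborel fx) \<xi>)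
       * ((SUP a\<in>{0..\<delta>}. ereal (fy (\<eta> - a))) / (INF a\<in>{1 - \<delta>..1}. ereal (fy (\<eta> - a))))
       \<le> ereal ((1 - c) / c)"
    and mass: "cdf (density lborel fx) \<xi> * cdf (density lborel fy) \<gamma> \<ge> 1 - \<delta>"
    and Ameas: "A \<in> borel_measurable lborel"
    and Arange: "\<And>\<theta>. A \<theta> \<in> {0..1}"
    and Alow: "\<And>\<theta>. \<theta> < t \<Longrightarrow> A \<theta> \<in> {1 - \<delta>..1}"
    and Ahigh: "\<And>\<theta>. \<theta> \<ge> t \<Longrightarrow> A \<theta> \<in> {0..\<delta>}"
  shows
    "(\<forall>x y. y \<ge> 1 - \<delta> - \<gamma> \<and> x \<le> t + \<xi>
        \<and> 0 < post_mass fx fy A x y UNIV \<and> post_mass fx fy A x y UNIV < \<infinity>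
        \<longrightarrow> ennreal c \<le> posterior fx fy A x y {\<theta>. \<theta> < t})
   \<and> (\<forall>x y. y \<le> \<delta> + \<gamma> \<and> x \<ge> t - \<xi>
        \<and> 0 < post_mass fx fy A x y UNIV \<and> post_mass fx fy A x y UNIV < \<infinity>
        \<longrightarrow> ennreal c \<le> posterior fx fy A x y {\<theta>. \<theta> \<ge> t})
   \<and> (\<forall>\<theta>. \<theta> < t \<longrightarrow>
        measure (err_law fx fy) {(ex, ey). A \<theta> + ey \<ge> 1 - \<delta> - \<gamma> \<and> \<theta> + ex \<le> t + \<xi>} \<ge> 1 - \<delta>)
   \<and> (\<forall>\<theta>. \<theta> \<ge> t \<longrightarrow>
        measure (err_law fx fy) {(ex, ey). A \<theta> + ey \<le> \<delta> + \<gamma> \<and> \<theta> + ex > t - \<xi>} \<ge> 1 - \<delta>)"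
proof -
  have mx: "fx \<in> borel_measurable borel" using dens(1) unfolding is_density_def by auto
  have my: "fy \<in> borel_measurable borel" using dens(2) unfolding is_density_def by auto
  have pxn: "\<And>u. 0 \<le> fx u" using dens(1) unfolding is_density_def by auto
  have pyn: "\<And>u. 0 \<le> fy u" using dens(2) unfolding is_density_def by auto
  have mA: "A \<in> borel_measurable borel" using Ameas by simp
  define F where "F = cdf (density lborel fx) \<xi>"
  define Fy where "Fy = cdf (density lborel fy) \<gamma>"
  note fxf = dens_facts[OF dens(1) sym(1)]
  note fyf = dens_facts[OF dens(2) sym(2)]
  have F01: "0 \<le> F" "F \<le> 1" unfolding F_def using fxf(6,7) by auto
  have Fy01: "0 \<le> Fy" "Fy \<le> 1" unfolding Fy_def using fyf(6,7) by auto
  have FF: "1 - \<delta> \<le> F * Fy" using mass unfolding F_def Fy_def by simp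
  have "0 < F * Fy" using FF par by linarith
  hence Fpos: "0 < F" using F01(1) by (metis less_eq_real_def mult_zero_left less_irrefl)
  have d1: "\<delta> \<le> 1" using par by linarith
  have ext: "\<exists>B I. 0 \<le> B \<and> 0 \<le> I \<and> (\<forall>a\<in>{0..\<delta>}. fy (\<eta> - a) \<le> B) \<and> (\<forall>b\<in>{1-\<delta>..1}. I \<le> fy (\<eta> - b))
     \<and> c * F * B \<le> (1-c) * (1-F) * I" if H: "\<eta> \<ge> 1 - \<delta> - \<gamma>" for \<eta>
    apply (rule ratio_extract[OF Fpos F01(2) c par(1) d1])
     apply (rule pyn)
    unfolding F_def by (rule ratio[OF H])
  have p1: "\<forall>x y. y \<ge> 1 - \<delta> - \<gamma> \<and> x \<le> t + \<xi>
        \<and> 0 < post_mass fx fy A x y UNIV \<and> post_mass fx fy A x y UNIV < \<infinity>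
        \<longrightarrow> ennreal c \<le> posterior fx fy A x y {\<theta>. \<theta> < t}"
  proof (intro allI impI)
    fix x y
    assume H: "y \<ge> 1 - \<delta> - \<gamma> \<and> x \<le> t + \<xi>
        \<and> 0 < post_mass fx fy A x y UNIV \<and> post_mass fx fy A x y UNIV < \<infinity>"
    obtain B I where B0: "0 \<le> B" and I0: "0 \<le> I" and BB: "\<forall>a\<in>{0..\<delta>}. fy (y - a) \<le> B"
      and II: "\<forall>b\<in>{1-\<delta>..1}. I \<le> fy (y - b)" and key: "c * F * B \<le> (1-c) * (1-F) * I"
      using ext[of y] H by blast
    have Pm: "{t..} \<in> sets borel" by simp
    have Qi: "\<And>\<theta>. \<theta> \<in> {\<theta>. \<theta> < t} \<longleftrightarrow> \<theta> \<notin> {t..}" by auto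
    have hB: "fy (y - A \<theta>) \<le> B" if "\<theta> \<in> {t..}" for \<theta>
    proof -
      have "A \<theta> \<in> {0..\<delta>}" using Ahigh that by simp
      thus ?thesis using BB by blast
    qed
    have hI: "I \<le> fy (y - A \<theta>)" if "\<theta> \<in> {\<theta>. \<theta> < t}" for \<theta>
    proof -
      have "A \<theta> \<in> {1-\<delta>..1}" using Alow that by simp
      thus ?thesis using II by blast
    qed
    have hp: "(\<integral>\<^sup>+\<theta>. ennreal (fx (x - \<theta>)) * indicator {t..} \<theta> \<partial>lborel) \<le> ennreal F"
    proof -
      have "(\<integral>\<^sup>+\<theta>. ennreal (fx (x - \<theta>)) * indicator {t..} \<theta> \<partial>lborel)
          = (\<integral>\<^sup>+\<theta>. ennreal (fx (x - \<theta>)) * indicator {..x-t} (x - \<theta>) \<partial>lborel)"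
        by (rule nn_integral_cong) (simp add: indicator_def)
      also have "\<dots> = emeasure (density lborel fx) {..x-t}" by (rule dens_shift[OF dens(1)]) simp
      also have "\<dots> \<le> emeasure (density lborel fx) {..\<xi>}"
        by (rule emeasure_mono) (use H in auto)
      also have "\<dots> = ennreal F" unfolding F_def by (rule fxf(1))
      finally show ?thesis .
    qed
    have hq: "ennreal (1 - F) \<le> (\<integral>\<^sup>+\<theta>. ennreal (fx (x - \<theta>)) * indicator {\<theta>. \<theta> < t} \<theta> \<partial>lborel)"
    proof -
      have "ennreal (1 - F) = emeasure (density lborel fx) {\<xi><..}" unfolding F_def by (rule fxf(2)[symmetric])
      also have "\<dots> \<le> emeasure (density lborel fx) {x-t<..}"
        by (rule emeasure_mono) (use H in auto)
      also have "\<dots> = (\<integral>\<^sup>+\<theta>. ennreal (fx (x - \<theta>)) * indicator {x-t<..} (x - \<theta>) \<partial>lborel)"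
        by (rule dens_shift[OF dens(1), symmetric]) simp
      also have "\<dots> = (\<integral>\<^sup>+\<theta>. ennreal (fx (x - \<theta>)) * indicator {\<theta>. \<theta> < t} \<theta> \<partial>lborel)"
        by (rule nn_integral_cong) (simp add: indicator_def)
      finally show ?thesis .
    qed
    have k2: "c * F * B \<le> (1 - c) * (1 - F) * I" using key by simp
    show "ennreal c \<le> posterior fx fy A x y {\<theta>. \<theta> < t}"
      by (rule post_generic[OF mx my mA pxn pyn Pm Qi c B0 I0 F01(1) _ hB hI hp hq k2])
         (use F01 H in auto)
  qed
  have p2: "\<forall>x y. y \<le> \<delta> + \<gamma> \<and> x \<ge> t - \<xi>
        \<and> 0 < post_mass fx fy A x y UNIV \<and> post_mass fx fy A x y UNIV < \<infinity>
        \<longrightarrow> ennreal c \<le> posterior fx fy A x y {\<theta>. \<theta> \<ge> t}"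
  proof (intro allI impI)
    fix x y
    assume H: "y \<le> \<delta> + \<gamma> \<and> x \<ge> t - \<xi>
        \<and> 0 < post_mass fx fy A x y UNIV \<and> post_mass fx fy A x y UNIV < \<infinity>"
    have "1 - y \<ge> 1 - \<delta> - \<gamma>" using H by linarith
    then obtain B I where B0: "0 \<le> B" and I0: "0 \<le> I" and BB: "\<forall>a\<in>{0..\<delta>}. fy (1 - y - a) \<le> B"
      and II: "\<forall>b\<in>{1-\<delta>..1}. I \<le> fy (1 - y - b)" and key: "c * F * B \<le> (1-c) * (1-F) * I"
      using ext[of "1 - y"] by blast
    have Pe: "{\<theta>::real. \<theta> < t} = {..<t}" by auto
    have Pm: "{\<theta>::real. \<theta> < t} \<in> sets borel" unfolding Pe by simp
    have Qi: "\<And>\<theta>. \<theta> \<in> {\<theta>. \<theta> \<ge> t} \<longleftrightarrow> \<theta> \<notin> {\<theta>. \<theta> < t}" by auto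
    have fyr: "fy (y - A \<theta>) = fy (1 - y - (1 - A \<theta>))" for \<theta>
    proof -
      have e: "1 - y - (1 - A \<theta>) = - (y - A \<theta>)" by simp
      show ?thesis unfolding e by (rule sym(2)[symmetric])
    qed
    have hB: "fy (y - A \<theta>) \<le> B" if "\<theta> \<in> {\<theta>. \<theta> < t}" for \<theta>
    proof -
      have "A \<theta> \<in> {1-\<delta>..1}" using Alow that by simp
      hence "1 - A \<theta> \<in> {0..\<delta>}" by simp
      hence "fy (1 - y - (1 - A \<theta>)) \<le> B" using BB by blast
      thus ?thesis using fyr[of \<theta>] by linarith
    qed
    have hI: "I \<le> fy (y - A \<theta>)" if "\<theta> \<in> {\<theta>. \<theta> \<ge> t}" for \<theta>
    proof -
      have "A \<theta> \<in> {0..\<delta>}" using Ahigh that by simp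
      hence "1 - A \<theta> \<in> {1-\<delta>..1}" by simp
      hence "I \<le> fy (1 - y - (1 - A \<theta>))" using II by blast
      thus ?thesis using fyr[of \<theta>] by linarith
    qed
    have hp: "(\<integral>\<^sup>+\<theta>. ennreal (fx (x - \<theta>)) * indicator {\<theta>. \<theta> < t} \<theta> \<partial>lborel) \<le> ennreal F"
    proof -
      have "(\<integral>\<^sup>+\<theta>. ennreal (fx (x - \<theta>)) * indicator {\<theta>. \<theta> < t} \<theta> \<partial>lborel)
          = (\<integral>\<^sup>+\<theta>. ennreal (fx (x - \<theta>)) * indicator {x-t<..} (x - \<theta>) \<partial>lborel)"
        by (rule nn_integral_cong) (simp add: indicator_def)
      also have "\<dots> = emeasure (density lborel fx) {x-t<..}" by (rule dens_shift[OF dens(1)]) simp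
      also have "\<dots> \<le> emeasure (density lborel fx) {-\<xi><..}"
        by (rule emeasure_mono) (use H in auto)
      also have "\<dots> = ennreal F" unfolding F_def by (rule fxf(3))
      finally show ?thesis .
    qed
    have hq: "ennreal (1 - F) \<le> (\<integral>\<^sup>+\<theta>. ennreal (fx (x - \<theta>)) * indicator {\<theta>. \<theta> \<ge> t} \<theta> \<partial>lborel)"
    proof -
      have "ennreal (1 - F) = emeasure (density lborel fx) {..-\<xi>}" unfolding F_def by (rule fxf(5)[symmetric])
      also have "\<dots> \<le> emeasure (density lborel fx) {..x-t}"
        by (rule emeasure_mono) (use H in auto)
      also have "\<dots> = (\<integral>\<^sup>+\<theta>. ennreal (fx (x - \<theta>)) * indicator {..x-t} (x - \<theta>) \<partial>lborel)"
        by (rule dens_shift[OF dens(1), symmetric]) simp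
      also have "\<dots> = (\<integral>\<^sup>+\<theta>. ennreal (fx (x - \<theta>)) * indicator {\<theta>. \<theta> \<ge> t} \<theta> \<partial>lborel)"
        by (rule nn_integral_cong) (simp add: indicator_def)
      finally show ?thesis .
    qed
    have k2: "c * F * B \<le> (1 - c) * (1 - F) * I" using key by simp
    show "ennreal c \<le> posterior fx fy A x y {\<theta>. \<theta> \<ge> t}"
      by (rule post_generic[OF mx my mA pxn pyn Pm Qi c B0 I0 F01(1) _ hB hI hp hq k2])
         (use F01 H in auto)
  qed
  define Dx where "Dx = density lborel (\<lambda>x. ennreal (fx x))"
  define Dy where "Dy = density lborel (\<lambda>x. ennreal (fy x))"
  have PDx: "prob_space Dx" unfolding Dx_def by (rule dens_prob[OF dens(1)])
  have PDy: "prob_space Dy" unfolding Dy_def by (rule dens_prob[OF dens(2)])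
  have E: "err_law fx fy = Dx \<Otimes>\<^sub>M Dy" unfolding err_law_def Dx_def Dy_def by simp
  interpret PE: prob_space "Dx \<Otimes>\<^sub>M Dy" by (rule prob_space_pair[OF PDx PDy])
  have sE: "sets (Dx \<Otimes>\<^sub>M Dy) = sets (borel \<Otimes>\<^sub>M borel)"
    by (rule sets_pair_measure_cong) (simp_all add: Dx_def Dy_def)
  have rect: "emeasure (Dx \<Otimes>\<^sub>M Dy) (X \<times> Y) = emeasure Dx X * emeasure Dy Y"
    if "X \<in> sets borel" "Y \<in> sets borel" for X Y
    by (rule sigma_finite_measure.emeasure_pair_measure_Times[OF prob_space_imp_sigma_finite[OF PDy]])
       (use that in \<open>simp_all add: Dx_def Dy_def\<close>)
  have lowb: "1 - \<delta> \<le> measure (Dx \<Otimes>\<^sub>M Dy) S"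
    if "S \<in> sets (borel \<Otimes>\<^sub>M borel)" "X \<times> Y \<subseteq> S" "X \<in> sets borel" "Y \<in> sets borel"
       "emeasure Dx X = ennreal F" "emeasure Dy Y = ennreal Fy" for S X Y
  proof -
    have "ennreal (1 - \<delta>) \<le> ennreal (F * Fy)" using FF by (rule ennreal_leI)
    also have "\<dots> = emeasure (Dx \<Otimes>\<^sub>M Dy) (X \<times> Y)"
      using rect[OF that(3,4)] that(5,6) F01 Fy01 by (simp add: ennreal_mult)
    also have "\<dots> \<le> emeasure (Dx \<Otimes>\<^sub>M Dy) S"
      by (rule emeasure_mono) (use that sE in auto)
    also have "\<dots> = ennreal (measure (Dx \<Otimes>\<^sub>M Dy) S)" by (rule PE.emeasure_eq_measure)
    finally show ?thesis by (simp add: ennreal_le_iff)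
  qed
  have p3: "\<forall>\<theta>. \<theta> < t \<longrightarrow>
        measure (err_law fx fy) {(ex, ey). A \<theta> + ey \<ge> 1 - \<delta> - \<gamma> \<and> \<theta> + ex \<le> t + \<xi>} \<ge> 1 - \<delta>"
  proof (intro allI impI)
    fix \<theta> assume th: "\<theta> < t"
    have Al: "A \<theta> \<in> {1-\<delta>..1}" using Alow[OF th] .
    have eqS: "{(ex, ey). A \<theta> + ey \<ge> 1 - \<delta> - \<gamma> \<and> \<theta> + ex \<le> t + \<xi>} = {..t + \<xi> - \<theta>} \<times> {1 - \<delta> - \<gamma> - A \<theta>..}"
      by auto
    have Sm: "{(ex, ey). A \<theta> + ey \<ge> 1 - \<delta> - \<gamma> \<and> \<theta> + ex \<le> t + \<xi>} \<in> sets (borel \<Otimes>\<^sub>M borel)"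
      unfolding eqS by (rule pair_measureI) simp_all
    have sub: "{..\<xi>} \<times> {-\<gamma>..} \<subseteq> {(ex, ey). A \<theta> + ey \<ge> 1 - \<delta> - \<gamma> \<and> \<theta> + ex \<le> t + \<xi>}"
      using Al th by auto
    show "measure (err_law fx fy) {(ex, ey). A \<theta> + ey \<ge> 1 - \<delta> - \<gamma> \<and> \<theta> + ex \<le> t + \<xi>} \<ge> 1 - \<delta>"
      unfolding E by (rule lowb[OF Sm sub]) (simp_all add: Dx_def Dy_def F_def Fy_def fxf(1) fyf(4))
  qed
  have p4: "\<forall>\<theta>. \<theta> \<ge> t \<longrightarrow>
        measure (err_law fx fy) {(ex, ey). A \<theta> + ey \<le> \<delta> + \<gamma> \<and> \<theta> + ex > t - \<xi>} \<ge> 1 - \<delta>"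
  proof (intro allI impI)
    fix \<theta> assume th: "\<theta> \<ge> t"
    have Ah: "A \<theta> \<in> {0..\<delta>}" using Ahigh[OF th] .
    have eqS: "{(ex, ey). A \<theta> + ey \<le> \<delta> + \<gamma> \<and> \<theta> + ex > t - \<xi>} = {t - \<xi> - \<theta><..} \<times> {..\<delta> + \<gamma> - A \<theta>}"
      by auto
    have Sm: "{(ex, ey). A \<theta> + ey \<le> \<delta> + \<gamma> \<and> \<theta> + ex > t - \<xi>} \<in> sets (borel \<Otimes>\<^sub>M borel)"
      unfolding eqS by (rule pair_measureI) simp_all
    have sub: "{-\<xi><..} \<times> {..\<gamma>} \<subseteq> {(ex, ey). A \<theta> + ey \<le> \<delta> + \<gamma> \<and> \<theta> + ex > t - \<xi>}"
      using Ah th by auto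
    show "measure (err_law fx fy) {(ex, ey). A \<theta> + ey \<le> \<delta> + \<gamma> \<and> \<theta> + ex > t - \<xi>} \<ge> 1 - \<delta>"
      unfolding E by (rule lowb[OF Sm sub]) (simp_all add: Dx_def Dy_def F_def Fy_def fxf(3) fyf(1))
  qed
  show ?thesis using p1 p2 p3 p4 by blast
qed

end
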